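(* In the setting described in the context, let $U_0,\dots,U_d$ be one of the six decompositions below, with $U_{-1}=U_{d+1}=0$ and empty sums equal to $0$. Then for $0\le i\le d$: $[0D]$: $(K-q^{2i-d}I)U_i\subseteq U_{i+1}+\cdots+U_d$ and $(K^{-1}-q^{d-2i}I)U_i\subseteq U_{i+1}$; $[0^*D^*]$: $(K-q^{2i-d}I)U_i\subseteq U_{i-1}$ and $(K^{-1}-q^{d-2i}I)U_i\subseteq U_0+\cdots+U_{i-1}$; $[0^*D]$: $(K-q^{2i-d}I)U_i=0$ and $(K^{-1}-q^{d-2i}I)U_i=0$; $[0^*0]$: $(K-q^{2i-d}I)U_i\subseteq U_0+\cdots+U_{i-1}$ and $(K^{-1}-q^{d-2i}I)U_i\subseteq U_{i-1}$; $[D^*0]$: $KU_i\subseteq U_0+\cdots+U_{i+1}$ and $K^{-1}U_i\subseteq U_{i-1}+\cdots+U_d$; $[D^*D]$: $(K-q^{2i-d}I)U_i\subseteq U_{i+1}$ and $(K^{-1}-q^{d-2i}I)U_i\subseteq U_{i+1}+\cdots+U_d$.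
   Context: $\mathbb K$ is an algebraically closed field, $q\in\mathbb K$ nonzero and not a root of unity, $V$ a nonzero finite-dimensional $\mathbb K$-vector space. A tridiagonal pair on $V$ is an ordered pair $A,A^*$ of linear maps $V\to V$ such that: (i) each of $A,A^*$ is diagonalizable; (ii) there is an ordering $V_0,\dots,V_d$ of the eigenspaces of $A$ with $A^*V_i\subseteq V_{i-1}+V_i+V_{i+1}$ ($V_{-1}=V_{d+1}=0$); (iii) there is an ordering $V^*_0,\dots,V^*_\delta$ of the eigenspaces of $A^*$ with $AV^*_i\subseteq V^*_{i-1}+V^*_i+V^*_{i+1}$ ($V^*_{-1}=V^*_{\delta+1}=0$); (iv) no subspace $W\ne0,V$ satisfies $AW\subseteq W$, $A^*W\subseteq W$. It is known $d=\delta$; orderings as in (ii),(iii) are called standard. Setting: $A,A^*$ is a tridiagonal pair on $V$; $V_0,\dots,V_d$ (resp. $V^*_0,\dots,V^*_d$) is a standard ordering of the eigenspaces of $A$ (resp. $A^*$); the eigenvalue of $A$ on $V_i$ is $aq^{2i-d}$ and that of $A^*$ on $V^*_i$ is $a^*q^{d-2i}$ for some nonzero $a,a^*\in\mathbb K$. The six decompositions of $V$ (sequences of nonzero subspaces whose sum is direct and equals $V$) are, for $0\le i\le d$: $[0D]$: $U_i=V_i$; $[0^*D^*]$: $U_i=V^*_i$; $[0^*D]$: $U_i=(V^*_0+\cdots+V^*_i)\cap(V_i+\cdots+V_d)$; $[0^*0]$: $U_i=(V^*_0+\cdots+V^*_i)\cap(V_0+\cdots+V_{d-i})$; $[D^*0]$: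 $U_i=(V^*_{d-i}+\cdots+V^*_d)\cap(V_0+\cdots+V_{d-i})$; $[D^*D]$: $U_i=(V^*_{d-i}+\cdots+V^*_d)\cap(V_i+\cdots+V_d)$. $K:V\to V$ is the linear map acting as $q^{2i-d}I$ on the $i$th subspace of $[0^*D]$ for each $i$. *)

theory Defs
  imports "HOL-Analysis.Analysis" "HOL-Computational_Algebra.Polynomial"
begin

text \<open>V is modelled as 'k^'n (every nonzero finite-dimensional space is of this form);
  linear maps V -> V are matrices 'k^'n^'n acting by (*v).\<close>

definition alg_closed_field :: "'k::field itself \<Rightarrow> bool" where
  "alg_closed_field T \<longleftrightarrow> (\<forall>p::'k poly. degree p > 0 \<longrightarrow> (\<exists>x. poly p x = 0))"

definition eigenspace :: "'k::field^'n^'n \<Rightarrow> 'k \<Rightarrow> ('k^'n) set" where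
  "eigenspace A \<theta> = {v. A *v v = \<theta> *s v}"

definition is_eigenvalue :: "'k::field^'n^'n \<Rightarrow> 'k \<Rightarrow> bool" where
  "is_eigenvalue A \<theta> \<longleftrightarrow> eigenspace A \<theta> \<noteq> {0}"

definition diagonalizable :: "'k::field^'n^'n \<Rightarrow> bool" where
  "diagonalizable A \<longleftrightarrow> vec.span (\<Union>\<theta>\<in>{\<theta>. is_eigenvalue A \<theta>}. eigenspace A \<theta>) = UNIV"

definition ssum :: "nat set \<Rightarrow> (nat \<Rightarrow> ('k::field^'n) set) \<Rightarrow> ('k^'n) set" where
  "ssum I U = vec.span (\<Union>j\<in>I. U j)"

definition standard_ordering ::
  "'k::field^'n^'n \<Rightarrow> 'k^'n^'n \<Rightarrow> nat \<Rightarrow> (nat \<Rightarrow> ('k^'n) set) \<Rightarrow> bool" where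
  "standard_ordering A B d Vs \<longleftrightarrow>
     (\<forall>i\<le>d. \<exists>\<theta>. is_eigenvalue A \<theta> \<and> Vs i = eigenspace A \<theta>) \<and>
     (\<forall>\<theta>. is_eigenvalue A \<theta> \<longrightarrow> (\<exists>i\<le>d. Vs i = eigenspace A \<theta>)) \<and>
     inj_on Vs {..d} \<and>
     (\<forall>i\<le>d. (\<lambda>v. B *v v) ` Vs i \<subseteq> ssum {j. j \<le> d \<and> i \<le> j + 1 \<and> j \<le> i + 1} Vs)"

definition tridiagonal_pair :: "'k::field^'n^'n \<Rightarrow> 'k^'n^'n \<Rightarrow> bool" where
  "tridiagonal_pair A As \<longleftrightarrow>
     diagonalizable A \<and> diagonalizable As \<and>
     (\<exists>d Vs. standard_ordering A As d Vs) \<and>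
     (\<exists>\<delta> Vst. standard_ordering As A \<delta> Vst) \<and>
     (\<forall>W. vec.subspace W \<and> (\<lambda>v. A *v v) ` W \<subseteq> W \<and> (\<lambda>v. As *v v) ` W \<subseteq> W
          \<longrightarrow> W = {0} \<or> W = UNIV)"

definition dec_0D :: "nat \<Rightarrow> (nat \<Rightarrow> ('k::field^'n) set) \<Rightarrow> (nat \<Rightarrow> ('k^'n) set) \<Rightarrow> nat \<Rightarrow> ('k^'n) set" where
  "dec_0D d Vs Vst i = Vs i"
definition dec_0sDs :: "nat \<Rightarrow> (nat \<Rightarrow> ('k::field^'n) set) \<Rightarrow> (nat \<Rightarrow> ('k^'n) set) \<Rightarrow> nat \<Rightarrow> ('k^'n) set" where
  "dec_0sDs d Vs Vst i = Vst i"
definition dec_0sD :: "nat \<Rightarrow> (nat \<Rightarrow> ('k::field^'n) set) \<Rightarrow> (nat \<Rightarrow> ('k^'n) set) \<Rightarrow> nat \<Rightarrow> ('k^'n) set" where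
  "dec_0sD d Vs Vst i = ssum {..i} Vst \<inter> ssum {i..d} Vs"
definition dec_0s0 :: "nat \<Rightarrow> (nat \<Rightarrow> ('k::field^'n) set) \<Rightarrow> (nat \<Rightarrow> ('k^'n) set) \<Rightarrow> nat \<Rightarrow> ('k^'n) set" where
  "dec_0s0 d Vs Vst i = ssum {..i} Vst \<inter> ssum {..d - i} Vs"
definition dec_Ds0 :: "nat \<Rightarrow> (nat \<Rightarrow> ('k::field^'n) set) \<Rightarrow> (nat \<Rightarrow> ('k^'n) set) \<Rightarrow> nat \<Rightarrow> ('k^'n) set" where
  "dec_Ds0 d Vs Vst i = ssum {d - i..d} Vst \<inter> ssum {..d - i} Vs"
definition dec_DsD :: "nat \<Rightarrow> (nat \<Rightarrow> ('k::field^'n) set) \<Rightarrow> (nat \<Rightarrow> ('k^'n) set) \<Rightarrow> nat \<Rightarrow> ('k^'n) set" where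
  "dec_DsD d Vs Vst i = ssum {d - i..d} Vst \<inter> ssum {i..d} Vs"

definition shifted_image :: "'k::field^'n^'n \<Rightarrow> 'k \<Rightarrow> ('k^'n) set \<Rightarrow> ('k^'n) set" where
  "shifted_image M c S = (\<lambda>v. M *v v - c *s v) ` S"

end

theory Submission
  imports Defs
begin


lemma ssum_sub: "vec.subspace (ssum I U)"
  unfolding ssum_def by (rule vec.subspace_span)

lemma ssum_mono: "I \<subseteq> J \<Longrightarrow> ssum I U \<subseteq> ssum J U"
  unfolding ssum_def by (intro vec.span_mono) blast

lemma ssum_superset: "j \<in> I \<Longrightarrow> U j \<subseteq> ssum I U"
  unfolding ssum_def using vec.span_superset by blast

lemma ssum_empty[simp]: "ssum {} U = {0}"
  unfolding ssum_def by simp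

lemma ssum_cong: "(\<And>j. j\<in>I \<Longrightarrow> U j = U' j) \<Longrightarrow> ssum I U = ssum I U'"
  unfolding ssum_def by simp

lemma ssum_reindex: "ssum I (\<lambda>j. U (f j)) = ssum (f ` I) U"
  unfolding ssum_def by (simp add: image_image)

lemma ssum_single: "vec.subspace (U j) \<Longrightarrow> ssum {j} U = U j"
  unfolding ssum_def by (simp add: vec.span_eq_iff)

lemma ssum_zero: "0 \<in> ssum I U"
  using ssum_sub vec.subspace_0 by blast

lemma ssum_le: "vec.subspace W \<Longrightarrow> (\<And>j. j \<in> I \<Longrightarrow> U j \<subseteq> W) \<Longrightarrow> ssum I U \<subseteq> W"
  unfolding ssum_def by (metis UN_subset_iff vec.span_eq_iff vec.span_mono)

lemma eigenspace_sub: "vec.subspace (eigenspace A t)"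
  unfolding eigenspace_def vec.subspace_def
  by (simp add: vec.add vec.scale vector_sadd_rdistrib vector_smult_assoc
      vector_add_ldistrib mult.commute)

lemma span_map:
  fixes M :: "'k::field^'n^'n"
  assumes W: "vec.subspace W" and h: "\<And>u. u \<in> S \<Longrightarrow> M *v u - c *s u \<in> W"
    and x: "x \<in> vec.span S"
  shows "M *v x - c *s x \<in> W"
proof (rule vec.span_induct_alt[OF x])
  show "M *v 0 - c *s 0 \<in> W" using W vec.subspace_0 by simp
next
  fix c' x y assume 2: "x \<in> S" "M *v y - c *s y \<in> W"
  have e: "M *v (c' *s x + y) - c *s (c' *s x + y) = c' *s (M *v x - c *s x) + (M *v y - c *s y)"
    by (simp add: vec.add vec.scale vector_add_ldistrib vector_ssub_ldistrib vector_smult_assoc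
        mult.commute algebra_simps)
  show "M *v (c' *s x + y) - c *s (c' *s x + y) \<in> W" unfolding e using 2 h W
    by (meson vec.subspace_add vec.subspace_scale)
qed

lemma ssum_map:
  fixes M :: "'k::field^'n^'n"
  assumes W: "vec.subspace W" and h: "\<And>j u. j \<in> I \<Longrightarrow> u \<in> U j \<Longrightarrow> M *v u - c *s u \<in> W"
    and x: "x \<in> ssum I U"
  shows "M *v x - c *s x \<in> W"
  using span_map[OF W _ x[unfolded ssum_def]] h by blast

lemma span_zero_lin:
  fixes f :: "'k::field^'n \<Rightarrow> 'k^'n"
  assumes add: "\<And>x y. f (x + y) = f x + f y" and sc: "\<And>c x. f (c *s x) = c *s f x"
    and h: "\<And>u. u \<in> S \<Longrightarrow> f u = 0" and x: "x \<in> vec.span S"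
  shows "f x = 0"
proof (rule vec.span_induct_alt[OF x])
  have "f 0 = f (0 *s 0)" by simp
  also have "\<dots> = 0" by (subst sc) simp
  finally show "f 0 = 0" .
next
  fix c x y assume "x \<in> S" "f y = 0"
  then show "f (c *s x + y) = 0" by (simp add: add sc h)
qed


lemma span_map0:
  fixes M :: "'k::field^'n^'n"
  assumes W: "vec.subspace W" and h: "\<And>u. u \<in> S \<Longrightarrow> M *v u \<in> W"
    and x: "x \<in> vec.span S"
  shows "M *v x \<in> W"
  using span_map[OF W _ x, of M 0] h by simp

lemma ssum_Un: "ssum (I \<union> J) U = {x + y |x y. x \<in> ssum I U \<and> y \<in> ssum J U}"
  unfolding ssum_def by (simp add: UN_Un vec.span_Un)



lemma eig_shift:
  fixes A :: "'k::field^'n^'n"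
  assumes e: "\<forall>k\<in>I. Vs k = eigenspace A (th k)" and j: "j \<in> I" and x: "x \<in> ssum I Vs"
  shows "A *v x - th j *s x \<in> ssum (I - {j}) Vs"
proof (rule ssum_map[OF ssum_sub _ x])
  fix k u assume k: "k \<in> I" and u: "u \<in> Vs k"
  have "A *v u = th k *s u" using e k u by (simp add: eigenspace_def)
  then have eq: "A *v u - th j *s u = (th k - th j) *s u" by (simp add: vector_sadd_rdistrib algebra_simps)
  show "A *v u - th j *s u \<in> ssum (I - {j}) Vs"
  proof (cases "k = j")
    case True then show ?thesis using eq ssum_zero by simp
  next
    case False
    then have "u \<in> ssum (I - {j}) Vs" using ssum_superset[of k "I - {j}" Vs] k u by blast
    then show ?thesis unfolding eq using ssum_sub vec.subspace_scale by blast
  qed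
qed

lemma indep:
  fixes A :: "'k::field^'n^'n"
  assumes fin: "finite I"
  shows "(\<forall>k\<in>insert i I. Vs k = eigenspace A (th k)) \<Longrightarrow> inj_on th (insert i I) \<Longrightarrow> i \<notin> I
    \<Longrightarrow> x \<in> Vs i \<Longrightarrow> x \<in> ssum I Vs \<Longrightarrow> x = 0"
  using fin
proof (induction I arbitrary: x rule: finite_induct)
  case empty
  then show ?case by simp
next
  case (insert j I)
  have e: "\<forall>k\<in>insert j I. Vs k = eigenspace A (th k)" using insert.prems(1) by blast
  have s: "A *v x - th j *s x \<in> ssum (insert j I - {j}) Vs"
    by (rule eig_shift[OF e _ insert.prems(5)]) simp
  have "insert j I - {j} = I" using insert.hyps by blast
  moreover have "A *v x = th i *s x" using insert.prems(1,4) by (simp add: eigenspace_def)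
  ultimately have s2: "(th i - th j) *s x \<in> ssum I Vs" using s by (simp add: vector_sadd_rdistrib algebra_simps)
  have s3: "(th i - th j) *s x \<in> Vs i" using insert.prems(1,4) eigenspace_sub vec.subspace_scale by blast
  have "(th i - th j) *s x = 0"
    apply (rule insert.IH[OF _ _ _ s3 s2])
    using insert.prems by (auto simp: inj_on_def)
  moreover have "th i \<noteq> th j" using insert.prems(2,3) by (auto simp: inj_on_def)
  ultimately show ?case by simp
qed

lemma so_eig:
  fixes A :: "'k::field^'n^'n"
  assumes so: "standard_ordering A B d Vs" and e: "\<forall>i\<le>d. Vs i = eigenspace A (th i)"
    and x: "x \<in> eigenspace A \<mu>" "x \<noteq> 0"
  shows "\<exists>j\<le>d. \<mu> = th j"
proof -
  have "is_eigenvalue A \<mu>" using x by (auto simp: is_eigenvalue_def eigenspace_def)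
  then obtain j where j: "j \<le> d" "Vs j = eigenspace A \<mu>" using so unfolding standard_ordering_def by blast
  then have "x \<in> eigenspace A (th j)" using e x by auto
  then have "\<mu> *s x = th j *s x" using x by (simp add: eigenspace_def)
  then have "\<mu> = th j" using x by simp
  then show ?thesis using j by blast
qed

lemma so_inj:
  assumes so: "standard_ordering A B d Vs" and e: "\<forall>i\<le>d. Vs i = eigenspace A (th i)"
  shows "inj_on th {..d}"
  using so e unfolding standard_ordering_def inj_on_def by (metis atMost_iff)

lemma so_nz:
  assumes so: "standard_ordering A B d Vs" and i: "i \<le> d"
  shows "Vs i \<noteq> {0}"
  using so i unfolding standard_ordering_def is_eigenvalue_def by metis

lemma so_ex:
  assumes so: "standard_ordering A B d Vs" and i: "i \<le> d"
  shows "\<exists>x\<in>Vs i. x \<noteq> 0"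
proof -
  obtain \<theta> where "is_eigenvalue A \<theta>" "Vs i = eigenspace A \<theta>"
    using so i unfolding standard_ordering_def by blast
  moreover have "0 \<in> eigenspace A \<theta>" by (simp add: eigenspace_def)
  ultimately show ?thesis unfolding is_eigenvalue_def by blast
qed

lemma so_tri:
  assumes so: "standard_ordering A B d Vs" and k: "k \<le> d" and u: "u \<in> Vs k"
  shows "B *v u \<in> ssum {j. j \<le> d \<and> k \<le> j+1 \<and> j \<le> k+1} Vs"
  using so k u unfolding standard_ordering_def by blast

lemma rev_img1: "i \<le> d \<Longrightarrow> (\<lambda>j. d - j) ` {i..(d::nat)} = {..d-i}"
proof (intro set_eqI iffI)
  fix x assume "i \<le> d" "x \<in> {..d - i}"
  then show "x \<in> (\<lambda>j. d - j) ` {i..d}" by (intro image_eqI[of _ _ "d - x"]) auto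
qed auto

lemma rev_img2: "i \<le> d \<Longrightarrow> (\<lambda>j. d - j) ` {..i} = {d-i..(d::nat)}"
proof (intro set_eqI iffI)
  fix x assume "i \<le> d" "x \<in> {d-i..d}"
  then show "x \<in> (\<lambda>j. d - j) ` {..i}" by (intro image_eqI[of _ _ "d - x"]) auto
qed auto

lemma rev_T: "i \<le> d \<Longrightarrow> ssum {i..d} (\<lambda>j. Vs (d-j)) = ssum {..d-i} Vs"
  by (simp add: ssum_reindex rev_img1)

lemma rev_S: "i \<le> d \<Longrightarrow> ssum {..i} (\<lambda>j. Vs (d-j)) = ssum {d-i..d} Vs"
  by (simp add: ssum_reindex rev_img2)

lemma so_rev:
  assumes so: "standard_ordering A B d Vs"
  shows "standard_ordering A B d (\<lambda>j. Vs (d - j))"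
  unfolding standard_ordering_def
proof (intro conjI allI impI)
  fix i assume "i \<le> d"
  then show "\<exists>\<theta>. is_eigenvalue A \<theta> \<and> Vs (d - i) = eigenspace A \<theta>"
    using so unfolding standard_ordering_def by simp
next
  fix \<theta> assume "is_eigenvalue A \<theta>"
  then obtain i where "i \<le> d" "Vs i = eigenspace A \<theta>" using so unfolding standard_ordering_def by blast
  then show "\<exists>i\<le>d. Vs (d - i) = eigenspace A \<theta>" by (intro exI[of _ "d - i"]) auto
next
  show "inj_on (\<lambda>j. Vs (d - j)) {..d}"
  proof (rule inj_onI)
    fix x y assume "x \<in> {..d}" "y \<in> {..d}" "Vs (d - x) = Vs (d - y)"
    then have "d - x = d - y" using so unfolding standard_ordering_def inj_on_def by auto
    then show "x = y" using \<open>x \<in> {..d}\<close> \<open>y \<in> {..d}\<close> by auto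
  qed
next
  fix i assume i: "i \<le> d"
  have "(\<lambda>v. B *v v) ` Vs (d - i) \<subseteq> ssum {j. j \<le> d \<and> d - i \<le> j + 1 \<and> j \<le> d - i + 1} Vs"
    using so i unfolding standard_ordering_def by auto
  also have "\<dots> \<subseteq> ssum ((\<lambda>j. d - j) ` {j. j \<le> d \<and> i \<le> j + 1 \<and> j \<le> i + 1}) Vs"
  proof (rule ssum_mono, rule subsetI)
    fix x assume "x \<in> {j. j \<le> d \<and> d - i \<le> j + 1 \<and> j \<le> d - i + 1}"
    then show "x \<in> (\<lambda>j. d - j) ` {j. j \<le> d \<and> i \<le> j + 1 \<and> j \<le> i + 1}"
      using i by (intro image_eqI[of _ _ "d - x"]) auto
  qed
  also have "\<dots> = ssum {j. j \<le> d \<and> i \<le> j + 1 \<and> j \<le> i + 1} (\<lambda>j. Vs (d - j))"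
    by (simp add: ssum_reindex)
  finally show "(\<lambda>v. B *v v) ` Vs (d - i) \<subseteq> ssum {j. j \<le> d \<and> i \<le> j + 1 \<and> j \<le> i + 1} (\<lambda>j. Vs (d - j))" .
qed



lemma generic:
  fixes A As :: "'k::field^'n^'n"
  assumes tp: "tridiagonal_pair A As"
    and so: "standard_ordering A As d Vs" and sos: "standard_ordering As A d Vst"
    and e: "\<forall>i\<le>d. Vs i = eigenspace A (th i)" and es: "\<forall>i\<le>d. Vst i = eigenspace As (ths i)"
    and Udef: "U = (\<lambda>i. ssum {..i} Vst \<inter> ssum {i..d} Vs)"
  shows "\<forall>i\<le>d. ssum {i..d} Vs = ssum {i..d} U"
    and "\<forall>i\<le>d. ssum {..i} Vst = ssum {..i} U"
    and "ssum {..d} U = UNIV"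
    and "\<forall>i\<le>d. \<forall>u\<in>U i. A *v u - th i *s u \<in> U (Suc i)"
    and "\<forall>i\<le>d. \<forall>u\<in>U i. As *v u - ths i *s u \<in> (if i = 0 then {0} else U (i - 1))"
proof -
  define T where "T i = ssum {i..d} Vs" for i
  define S where "S i = ssum {..<i} Vst" for i
  have subT: "vec.subspace (T i)" for i unfolding T_def by (rule ssum_sub)
  have subS: "vec.subspace (S i)" for i unfolding S_def by (rule ssum_sub)
  have UST: "U i = S (Suc i) \<inter> T i" for i unfolding Udef S_def T_def by (simp add: lessThan_Suc_atMost)
  have subU: "vec.subspace (U i)" for i unfolding UST using subS subT by (rule vec.subspace_inter)
  have T0: "T 0 = UNIV"
  proof -
    have "vec.span (\<Union>\<theta>\<in>{\<theta>. is_eigenvalue A \<theta>}. eigenspace A \<theta>) = UNIV"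
      using tp unfolding tridiagonal_pair_def diagonalizable_def by blast
    moreover have "(\<Union>\<theta>\<in>{\<theta>. is_eigenvalue A \<theta>}. eigenspace A \<theta>) \<subseteq> (\<Union>j\<in>{0..d}. Vs j)"
    proof
      fix x assume "x \<in> (\<Union>\<theta>\<in>{\<theta>. is_eigenvalue A \<theta>}. eigenspace A \<theta>)"
      then obtain \<theta> where "is_eigenvalue A \<theta>" "x \<in> eigenspace A \<theta>" by blast
      then obtain j where "j \<le> d" "Vs j = eigenspace A \<theta>" using so unfolding standard_ordering_def by blast
      then show "x \<in> (\<Union>j\<in>{0..d}. Vs j)" using \<open>x \<in> eigenspace A \<theta>\<close> by auto
    qed
    ultimately show ?thesis unfolding T_def ssum_def using vec.span_mono by blast
  qed
  have TSd: "T (Suc d) = {0}" unfolding T_def by simp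
  have S0: "S 0 = {0}" unfolding S_def by simp
  have LA1: "A *v x - th i *s x \<in> T (Suc i)" if "i \<le> d" "x \<in> T i" for i x
  proof -
    have "A *v x - th i *s x \<in> ssum ({i..d} - {i}) Vs"
      by (rule eig_shift) (use that e in \<open>auto simp: T_def\<close>)
    moreover have "{i..d} - {i} = {Suc i..d}" by auto
    ultimately show ?thesis unfolding T_def by simp
  qed
  have LA2: "A *v x - c *s x \<in> S (Suc i)" if "i \<le> Suc d" "x \<in> S i" for i x c
  proof (unfold S_def, rule ssum_map[OF ssum_sub _ that(2)[unfolded S_def]], fold S_def)
    fix k u assume k: "k \<in> {..<i}" and u: "u \<in> Vst k"
    have "A *v u \<in> ssum {j. j \<le> d \<and> k \<le> j+1 \<and> j \<le> k+1} Vst"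
      using so_tri[OF sos _ u] k that by auto
    also have "\<dots> \<subseteq> S (Suc i)" unfolding S_def by (rule ssum_mono) (use k in auto)
    finally have 1: "A *v u \<in> S (Suc i)" .
    have "u \<in> S (Suc i)" unfolding S_def using ssum_superset[of k "{..<Suc i}" Vst] k u by auto
    then have "c *s u \<in> S (Suc i)" using subS vec.subspace_scale by blast
    then show "A *v u - c *s u \<in> S (Suc i)" using 1 subS vec.subspace_diff by blast
  qed
  have LB1: "As *v x - ths i *s x \<in> S i" if "i \<le> d" "x \<in> S (Suc i)" for i x
  proof -
    have "As *v x - ths i *s x \<in> ssum ({..<Suc i} - {i}) Vst"
      by (rule eig_shift) (use that es in \<open>auto simp: S_def\<close>)
    moreover have "{..<Suc i} - {i} = {..<i}" by auto
    ultimately show ?thesis unfolding S_def by simp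
  qed
  have LB2: "As *v x - c *s x \<in> T (i - 1)" if "i \<le> d" "x \<in> T i" for i x c
  proof (unfold T_def, rule ssum_map[OF ssum_sub _ that(2)[unfolded T_def]], fold T_def)
    fix k u assume k: "k \<in> {i..d}" and u: "u \<in> Vs k"
    have "As *v u \<in> ssum {j. j \<le> d \<and> k \<le> j+1 \<and> j \<le> k+1} Vs"
      using so_tri[OF so _ u] k that by auto
    also have "\<dots> \<subseteq> T (i - 1)" unfolding T_def by (rule ssum_mono) (use k in auto)
    finally have 1: "As *v u \<in> T (i - 1)" .
    have "k \<in> {i-1..d}" using k by auto
    then have "u \<in> T (i - 1)" unfolding T_def using ssum_superset[of k "{i-1..d}" Vs] u by blast
    then have "c *s u \<in> T (i - 1)" using subT vec.subspace_scale by blast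
    then show "As *v u - c *s u \<in> T (i - 1)" using 1 subT vec.subspace_diff by blast
  qed
  have irr: "\<And>W. vec.subspace W \<Longrightarrow> (\<lambda>v. A *v v) ` W \<subseteq> W \<Longrightarrow> (\<lambda>v. As *v v) ` W \<subseteq> W
      \<Longrightarrow> W = {0} \<or> W = UNIV"
    using tp unfolding tridiagonal_pair_def by blast
  have Z: "S i \<inter> T i = {0}" if "i \<le> d" for i
  proof -
    define Z where "Z i = S i \<inter> T i" for i
    have subZ: "vec.subspace (Z i)" for i unfolding Z_def using subS subT by (rule vec.subspace_inter)
    define W where "W = vec.span (\<Union>i\<in>{1..d}. Z i)"
    have subW: "vec.subspace W" unfolding W_def by (rule vec.subspace_span)
    have ZW: "Z i \<subseteq> W" if "i \<in> {1..d}" for i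
    proof -
      have "Z i \<subseteq> (\<Union>i\<in>{1..d}. Z i)" using that by blast
      also have "\<dots> \<subseteq> W" unfolding W_def by (rule vec.span_superset)
      finally show ?thesis .
    qed
    have AW: "(\<lambda>v. A *v v) ` W \<subseteq> W"
    proof (rule image_subsetI)
      fix x assume "x \<in> W"
      show "A *v x \<in> W"
      proof (rule span_map0[OF subW _ \<open>x \<in> W\<close>[unfolded W_def]])
      fix u assume "u \<in> (\<Union>i\<in>{1..d}. Z i)"
      then obtain i where i: "i \<in> {1..d}" "u \<in> Z i" by blast
      define r where "r = A *v u - th i *s u"
      have "r \<in> S (Suc i)" unfolding r_def using LA2 i by (auto simp: Z_def)
      moreover have "r \<in> T (Suc i)" unfolding r_def using LA1 i by (auto simp: Z_def)
      ultimately have rW: "r \<in> W"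
      proof (cases "Suc i \<le> d")
        case True
        then show ?thesis using ZW[of "Suc i"] \<open>r \<in> S (Suc i)\<close> \<open>r \<in> T (Suc i)\<close> by (auto simp: Z_def)
      next
        case False
        then have "Suc i = Suc d" using i by auto
        then show ?thesis using \<open>r \<in> T (Suc i)\<close> TSd subW vec.subspace_0 by auto
      qed
      have "th i *s u \<in> W" using ZW[OF i(1)] i(2) subZ vec.subspace_scale by blast
      then have "r + th i *s u \<in> W" using rW subW vec.subspace_add by blast
      then show "A *v u \<in> W" unfolding r_def by simp
    qed
    qed
    have AsW: "(\<lambda>v. As *v v) ` W \<subseteq> W"
    proof (rule image_subsetI)
      fix x assume "x \<in> W"
      show "As *v x \<in> W"
      proof (rule span_map0[OF subW _ \<open>x \<in> W\<close>[unfolded W_def]])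
      fix u assume "u \<in> (\<Union>i\<in>{1..d}. Z i)"
      then obtain i where i: "i \<in> {1..d}" "u \<in> Z i" by blast
      define r where "r = As *v u - ths (i - 1) *s u"
      have "u \<in> S (Suc (i - 1))" using i by (auto simp: Z_def)
      then have "r \<in> S (i - 1)" unfolding r_def using LB1 i by auto
      moreover have "r \<in> T (i - 1)" unfolding r_def using LB2 i by (auto simp: Z_def)
      ultimately have rW: "r \<in> W"
      proof (cases "1 \<le> i - 1")
        case True
        then have "i - 1 \<in> {1..d}" using i by auto
        then have "Z (i - 1) \<subseteq> W" by (rule ZW)
        moreover have "r \<in> Z (i - 1)" unfolding Z_def using \<open>r \<in> S (i - 1)\<close> \<open>r \<in> T (i - 1)\<close> by simp
        ultimately show ?thesis by blast
      next
        case False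
        then have "i - 1 = 0" by auto
        then show ?thesis using \<open>r \<in> S (i - 1)\<close> S0 subW vec.subspace_0 by auto
      qed
      have "ths (i - 1) *s u \<in> W" using ZW[OF i(1)] i(2) subZ vec.subspace_scale by blast
      then have "r + ths (i - 1) *s u \<in> W" using rW subW vec.subspace_add by blast
      then show "As *v u \<in> W" unfolding r_def by simp
    qed
    qed
    have WT: "W \<subseteq> T 1"
      unfolding W_def
    proof (rule vec.span_minimal[OF _ subT])
      show "(\<Union>i\<in>{1..d}. Z i) \<subseteq> T 1"
      proof
        fix x assume "x \<in> (\<Union>i\<in>{1..d}. Z i)"
        then obtain i where "i \<in> {1..d}" "x \<in> T i" by (auto simp: Z_def)
        moreover have "T i \<subseteq> T 1" if "i \<in> {1..d}" unfolding T_def by (rule ssum_mono) (use that in auto)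
        ultimately show "x \<in> T 1" by blast
      qed
    qed
    have "T 1 \<noteq> UNIV"
    proof
      assume "T 1 = UNIV"
      obtain x where x: "x \<in> Vs 0" "x \<noteq> 0" using so_ex[OF so, of 0] by blast
      have "x = 0"
      proof (rule indep[where I="{1..d}" and i=0 and x=x and Vs=Vs and A=A and th=th])
        show "\<forall>k\<in>insert 0 {1..d}. Vs k = eigenspace A (th k)" using e by auto
        show "inj_on th (insert 0 {1..d})" by (rule inj_on_subset[OF so_inj[OF so e]]) auto
        show "x \<in> ssum {1..d} Vs" using \<open>T 1 = UNIV\<close> unfolding T_def by auto
      qed (use x in auto)
      then show False using x by simp
    qed
    then have "W = {0}" using irr[OF subW AW AsW] WT by auto
    then show ?thesis
    proof (cases "i = 0")
      case True
      then show ?thesis using S0 subT vec.subspace_0 by auto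
    next
      case False
      then have "Z i \<subseteq> {0}" using ZW[of i] that \<open>W = {0}\<close> by auto
      then show ?thesis using subZ[of i] vec.subspace_0 unfolding Z_def by auto
    qed
  qed
  have raise: "A *v u - th i *s u \<in> U (Suc i)" if "i \<le> d" "u \<in> U i" for i u
    using LA1[of i u] LA2[of "Suc i" u "th i"] that unfolding UST by auto
  have lower: "As *v u - ths i *s u \<in> (if i = 0 then {0} else U (i - 1))" if "i \<le> d" "u \<in> U i" for i u
  proof -
    have 1: "As *v u - ths i *s u \<in> S i" using LB1 that unfolding UST by auto
    have 2: "As *v u - ths i *s u \<in> T (i - 1)" using LB2 that unfolding UST by auto
    show ?thesis
    proof (cases "i = 0")
      case True then show ?thesis using 1 S0 by auto
    next
      case False then show ?thesis using 1 2 unfolding UST by auto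
    qed
  qed
  define W2 where "W2 = vec.span (\<Union>i\<in>{..d}. U i)"
  have subW2: "vec.subspace W2" unfolding W2_def by (rule vec.subspace_span)
  have UW2: "U i \<subseteq> W2" if "i \<le> d" for i
  proof -
    have "U i \<subseteq> (\<Union>i\<in>{..d}. U i)" using that by blast
    also have "\<dots> \<subseteq> W2" unfolding W2_def by (rule vec.span_superset)
    finally show ?thesis .
  qed
  have W2: "W2 = UNIV"
  proof -
    have AW: "(\<lambda>v. A *v v) ` W2 \<subseteq> W2"
    proof (rule image_subsetI)
      fix x assume "x \<in> W2"
      show "A *v x \<in> W2"
      proof (rule span_map0[OF subW2 _ \<open>x \<in> W2\<close>[unfolded W2_def]])
      fix u assume "u \<in> (\<Union>i\<in>{..d}. U i)"
      then obtain i where i: "i \<le> d" "u \<in> U i" by blast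
      define r where "r = A *v u - th i *s u"
      have r: "r \<in> U (Suc i)" unfolding r_def using raise i by auto
      have rW: "r \<in> W2"
      proof (cases "Suc i \<le> d")
        case True then show ?thesis using UW2 r by auto
      next
        case False
        then have "Suc i = Suc d" using i by auto
        then show ?thesis using r TSd subW2 vec.subspace_0 unfolding UST by auto
      qed
      have "th i *s u \<in> W2" using UW2[OF i(1)] i(2) subU vec.subspace_scale by blast
      then have "r + th i *s u \<in> W2" using rW subW2 vec.subspace_add by blast
      then show "A *v u \<in> W2" unfolding r_def by simp
    qed
    qed
    have AsW: "(\<lambda>v. As *v v) ` W2 \<subseteq> W2"
    proof (rule image_subsetI)
      fix x assume "x \<in> W2"
      show "As *v x \<in> W2"
      proof (rule span_map0[OF subW2 _ \<open>x \<in> W2\<close>[unfolded W2_def]])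
      fix u assume "u \<in> (\<Union>i\<in>{..d}. U i)"
      then obtain i where i: "i \<le> d" "u \<in> U i" by blast
      define r where "r = As *v u - ths i *s u"
      have r: "r \<in> (if i = 0 then {0} else U (i - 1))" unfolding r_def using lower i by auto
      have rW: "r \<in> W2"
      proof (cases "i = 0")
        case True then show ?thesis using r subW2 vec.subspace_0 by auto
      next
        case False
        then have "r \<in> U (i - 1)" using r by simp
        moreover have "U (i - 1) \<subseteq> W2" by (rule UW2) (use i in simp)
        ultimately show ?thesis by blast
      qed
      have "ths i *s u \<in> W2" using UW2[OF i(1)] i(2) subU vec.subspace_scale by blast
      then have "r + ths i *s u \<in> W2" using rW subW2 vec.subspace_add by blast
      then show "As *v u \<in> W2" unfolding r_def by simp
    qed
    qed
    have "W2 \<noteq> {0}"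
    proof
      assume W0: "W2 = {0}"
      have "Vst 0 \<subseteq> U 0"
      proof
        fix x assume x: "x \<in> Vst 0"
        have "x \<in> S 1" unfolding S_def using ssum_superset[of 0 "{..<1}" Vst] x by auto
        then show "x \<in> U 0" unfolding UST using T0 by auto
      qed
      then have "Vst 0 \<subseteq> {0}" using UW2[of 0] W0 by auto
      then show False using so_ex[OF sos, of 0] by blast
    qed
    then show ?thesis using irr[OF subW2 AW AsW] by auto
  qed
  have GT1: "ssum {i..d} U \<subseteq> T i" for i
    proof (rule ssum_le[OF subT])
      fix j assume j: "j \<in> {i..d}"
      have "T j \<subseteq> T i" unfolding T_def by (rule ssum_mono) (use j in auto)
      then show "U j \<subseteq> T i" unfolding UST by auto
    qed
  have GS1: "ssum {..i} U \<subseteq> S (Suc i)" for i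
    proof (rule ssum_le[OF subS])
      fix j assume j: "j \<in> {..i}"
      have "S (Suc j) \<subseteq> S (Suc i)" unfolding S_def by (rule ssum_mono) (use j in auto)
      then show "U j \<subseteq> S (Suc i)" unfolding UST by auto
    qed
  have GT: "T i = ssum {i..d} U" if "i \<le> d" for i
  proof
    show "ssum {i..d} U \<subseteq> T i" by (rule GT1)
  next
    show "T i \<subseteq> ssum {i..d} U"
    proof
      fix v assume v: "v \<in> T i"
      have "v \<in> ssum ({..<i} \<union> {i..d}) U"
      proof -
        have "{..<i} \<union> {i..d} = {..d}" using that by auto
        then show ?thesis using W2 unfolding W2_def ssum_def by simp
      qed
      then obtain x y where xy: "v = x + y" "x \<in> ssum {..<i} U" "y \<in> ssum {i..d} U"
        unfolding ssum_Un by blast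
      have "x \<in> S i"
      proof (rule subsetD[OF ssum_le[OF subS] xy(2)])
        fix j assume "j \<in> {..<i}"
        then have "S (Suc j) \<subseteq> S i" unfolding S_def by (intro ssum_mono) auto
        then show "U j \<subseteq> S i" unfolding UST by auto
      qed
      moreover
      have "y \<in> T i" using xy(3) GT1 by blast
      then have "v - y \<in> T i" using v vec.subspace_diff[OF subT] by blast
      moreover have "v - y = x" using xy(1) by simp
      ultimately have "x \<in> S i \<inter> T i" by simp
      then have "x = 0" using Z[OF that] by blast
      then show "v \<in> ssum {i..d} U" using xy by simp
    qed
  qed
  have GS: "S (Suc i) = ssum {..i} U" if "i \<le> d" for i
  proof
    show "ssum {..i} U \<subseteq> S (Suc i)" by (rule GS1)
  next
    show "S (Suc i) \<subseteq> ssum {..i} U"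
    proof
      fix v assume v: "v \<in> S (Suc i)"
      have "v \<in> ssum ({..i} \<union> {Suc i..d}) U"
      proof -
        have "{..i} \<union> {Suc i..d} = {..d}" using that by auto
        then show ?thesis using W2 unfolding W2_def ssum_def by simp
      qed
      then obtain x y where xy: "v = x + y" "x \<in> ssum {..i} U" "y \<in> ssum {Suc i..d} U"
        unfolding ssum_Un by blast
      have "y = 0"
      proof (cases "Suc i \<le> d")
        case True
        have yT: "y \<in> T (Suc i)" using GT[OF True] xy(3) by simp
        have "x \<in> S (Suc i)" using xy(2) GS1 by blast
        then have "v - x \<in> S (Suc i)" using v vec.subspace_diff[OF subS] by blast
        moreover have "v - x = y" using xy(1) by simp
        ultimately have "y \<in> S (Suc i) \<inter> T (Suc i)" using yT by simp
        then show ?thesis using Z[OF True] by blast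
      next
        case False
        then have "{Suc i..d} = {}" by auto
        then show ?thesis using xy(3) by simp
      qed
      then show "v \<in> ssum {..i} U" using xy by simp
    qed
  qed
  show "\<forall>i\<le>d. ssum {i..d} Vs = ssum {i..d} U"
  proof (intro allI impI)
    fix i assume "i \<le> d"
    from GT[OF this] show "ssum {i..d} Vs = ssum {i..d} U" unfolding T_def .
  qed
  show "\<forall>i\<le>d. ssum {..i} Vst = ssum {..i} U"
  proof (intro allI impI)
    fix i assume "i \<le> d"
    from GS[OF this] show "ssum {..i} Vst = ssum {..i} U" unfolding S_def lessThan_Suc_atMost .
  qed
  show "ssum {..d} U = UNIV" using W2 unfolding W2_def ssum_def atMost_atLeast0 .
  show "\<forall>i\<le>d. \<forall>u\<in>U i. A *v u - th i *s u \<in> U (Suc i)" using raise by blast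
  show "\<forall>i\<le>d. \<forall>u\<in>U i. As *v u - ths i *s u \<in> (if i = 0 then {0} else U (i - 1))" using lower by blast
qed



lemma powi_inj:
  fixes q :: "'k::field"
  assumes q: "q \<noteq> 0" and nr: "\<forall>m::nat. m > 0 \<longrightarrow> q ^ m \<noteq> 1"
  shows "q powi m = q powi n \<Longrightarrow> m = n"
proof -
  have main: "q powi m \<noteq> q powi n" if "n < m" for m n :: int
  proof
    assume eq: "q powi m = q powi n"
    have "q powi m = q powi (m - n) * q powi n" using q by (simp add: power_int_add[symmetric])
    then have "q powi (m - n) = 1" using eq q by simp
    moreover have "m - n = int (nat (m - n))" using that by simp
    ultimately have "q ^ nat (m - n) = 1" by (metis power_int_of_nat)
    moreover have "nat (m - n) > 0" using that by simp
    ultimately show False using nr by blast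
  qed
  assume "q powi m = q powi n"
  then show "m = n" using main[of n m] main[of m n] by (cases m n rule: linorder_cases) auto
qed

lemma vec_comb_eq:
  fixes x y :: "'k::field^'n"
  shows "(\<And>k. X $ k = Y $ k) \<Longrightarrow> X = Y"
  by (simp add: vec_eq_iff)



theorem theorem11p1:
  fixes A As K :: "'k::field^'n::finite^'n"
    and q a as :: 'k
    and d :: nat
    and Vs Vst :: "nat \<Rightarrow> ('k^'n) set"
  assumes "alg_closed_field TYPE('k)"
    and "q \<noteq> 0" and "\<forall>m::nat. m > 0 \<longrightarrow> q ^ m \<noteq> 1"
    and "tridiagonal_pair A As"
    and "standard_ordering A As d Vs"
    and "standard_ordering As A d Vst"
    and "a \<noteq> 0" and "as \<noteq> 0"
    and "\<forall>i\<le>d. Vs i = eigenspace A (a * q powi (2 * int i - int d))"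
    and "\<forall>i\<le>d. Vst i = eigenspace As (as * q powi (int d - 2 * int i))"
    and "\<forall>i\<le>d. \<forall>v\<in>dec_0sD d Vs Vst i. K *v v = q powi (2 * int i - int d) *s v"
  shows
   "(let U = dec_0D d Vs Vst in \<forall>i\<le>d.
        shifted_image K (q powi (2 * int i - int d)) (U i) \<subseteq> ssum {i+1..d} U \<and>
        shifted_image (matrix_inv K) (q powi (int d - 2 * int i)) (U i)
           \<subseteq> ssum {j. j \<le> d \<and> j = i + 1} U) \<and>
    (let U = dec_0sDs d Vs Vst in \<forall>i\<le>d.
        shifted_image K (q powi (2 * int i - int d)) (U i) \<subseteq> ssum {j. j \<le> d \<and> j + 1 = i} U \<and>
        shifted_image (matrix_inv K) (q powi (int d - 2 * int i)) (U i) \<subseteq> ssum {..<i} U) \<and>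
    (let U = dec_0sD d Vs Vst in \<forall>i\<le>d.
        shifted_image K (q powi (2 * int i - int d)) (U i) = {0} \<and>
        shifted_image (matrix_inv K) (q powi (int d - 2 * int i)) (U i) = {0}) \<and>
    (let U = dec_0s0 d Vs Vst in \<forall>i\<le>d.
        shifted_image K (q powi (2 * int i - int d)) (U i) \<subseteq> ssum {..<i} U \<and>
        shifted_image (matrix_inv K) (q powi (int d - 2 * int i)) (U i)
           \<subseteq> ssum {j. j \<le> d \<and> j + 1 = i} U) \<and>
    (let U = dec_Ds0 d Vs Vst in \<forall>i\<le>d.
        (\<lambda>v. K *v v) ` U i \<subseteq> ssum {..min d (i+1)} U \<and>
        (\<lambda>v. matrix_inv K *v v) ` U i \<subseteq> ssum {i-1..d} U) \<and>
    (let U = dec_DsD d Vs Vst in \<forall>i\<le>d.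
        shifted_image K (q powi (2 * int i - int d)) (U i) \<subseteq> ssum {j. j \<le> d \<and> j = i + 1} U \<and>
        shifted_image (matrix_inv K) (q powi (int d - 2 * int i)) (U i) \<subseteq> ssum {i+1..d} U)"
proof -
  note tp = assms(4) and so = assms(5) and sos = assms(6)
  have q: "q \<noteq> 0" and nr: "\<forall>m::nat. m > 0 \<longrightarrow> q ^ m \<noteq> 1" using assms(2,3) by auto
  define c where "c i = q powi (2 * int i - int d)" for i
  define th where "th i = a * c i" for i
  define ths where "ths i = as * inverse (c i)" for i
  have cnz: "c i \<noteq> 0" for i using q by (simp add: c_def)
  have cinv: "q powi (int d - 2 * int i) = inverse (c i)" for i
  proof -
    have "int d - 2 * int i = - (2 * int i - int d)" by simp
    then show ?thesis unfolding c_def by (simp only: power_int_minus)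
  qed
  have cSuc: "c (Suc i) = q^2 * c i" for i
  proof -
    have "c (Suc i) = q powi (2 + (2 * int i - int d))" unfolding c_def by (simp add: algebra_simps)
    also have "\<dots> = q powi 2 * q powi (2 * int i - int d)" using q by (simp add: power_int_add)
    finally show ?thesis unfolding c_def by simp
  qed
  have cinj: "c m = c n \<Longrightarrow> m = n" for m n
    using powi_inj[OF q nr, of "2 * int m - int d" "2 * int n - int d"] unfolding c_def by simp
  have e: "\<forall>i\<le>d. Vs i = eigenspace A (th i)" using assms(9) unfolding th_def c_def by simp
  have es: "\<forall>i\<le>d. Vst i = eigenspace As (ths i)" using assms(10) unfolding ths_def cinv by simp
  define U0 where "U0 = (\<lambda>i. ssum {..i} Vst \<inter> ssum {i..d} Vs)"
  have U0eq: "dec_0sD d Vs Vst = U0" by (rule ext) (simp add: dec_0sD_def U0_def)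
  have subU0: "vec.subspace (U0 i)" for i unfolding U0_def using ssum_sub ssum_sub by (rule vec.subspace_inter)
  note G0 = generic[OF tp so sos e es U0_def]
  have Kact: "\<forall>i\<le>d. \<forall>v\<in>U0 i. K *v v = c i *s v" using assms(11) unfolding U0eq c_def by simp
  have surjK: "surj ((*v) K)"
  proof -
    have "x \<in> range ((*v) K)" for x
    proof -
      have x: "x \<in> vec.span (\<Union>j\<in>{..d}. U0 j)" using G0(3) unfolding ssum_def by simp
      show ?thesis
      proof (rule vec.span_induct_alt[OF x])
        show "0 \<in> range ((*v) K)" by (rule range_eqI[of _ _ 0]) simp
      next
        fix c' x y assume x: "x \<in> (\<Union>j\<in>{..d}. U0 j)" and y: "y \<in> range ((*v) K)"
        obtain j where j: "j \<le> d" "x \<in> U0 j" using x by blast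
        obtain z where z: "y = K *v z" using y by blast
        have "K *v (inverse (c j) *s x) = x" using Kact j cnz by (simp add: vec.scale vector_smult_assoc)
        then have "K *v (c' *s (inverse (c j) *s x) + z) = c' *s x + y"
          by (simp only: vec.add vec.scale z)
        then show "c' *s x + y \<in> range ((*v) K)" by (metis rangeI)
      qed
    qed
    then show ?thesis by blast
  qed
  then have "\<exists>B. K ** B = mat 1" by (simp add: matrix_right_invertible_surjective)
  then have invK: "invertible K" by (simp add: invertible_right_inverse)
  define Kinv where "Kinv = matrix_inv K"
  have KK: "K ** Kinv = mat 1 \<and> Kinv ** K = mat 1"
    unfolding Kinv_def matrix_inv_def using invK unfolding invertible_def by (rule someI_ex)
  have KinvK: "Kinv *v (K *v x) = x" for x
    using KK by (simp add: matrix_vector_mul_assoc)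
  have Kiact: "\<forall>i\<le>d. \<forall>v\<in>U0 i. Kinv *v v = inverse (c i) *s v"
  proof (intro allI impI ballI)
    fix i v assume i: "i \<le> d" and v: "v \<in> U0 i"
    have "v = Kinv *v (c i *s v)" using KinvK[of v] Kact i v by simp
    then have "v = c i *s (Kinv *v v)" by (simp add: vec.scale)
    then have "inverse (c i) *s v = inverse (c i) *s (c i *s (Kinv *v v))" by simp
    then show "Kinv *v v = inverse (c i) *s v" using cnz by (simp add: vector_smult_assoc)
  qed
  have diagT: "\<forall>i\<le>d. \<forall>x\<in>ssum {i..d} Vs. M *v x - f i *s x \<in> ssum {Suc i..d} Vs"
    if Mact: "\<forall>j\<le>d. \<forall>u\<in>U0 j. M *v u = f j *s u" for M f
  proof (intro allI impI ballI)
    fix i x assume i: "i \<le> d" and x: "x \<in> ssum {i..d} Vs"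
    have x': "x \<in> ssum {i..d} U0" using x G0(1) i by simp
    show "M *v x - f i *s x \<in> ssum {Suc i..d} Vs"
    proof (rule ssum_map[OF ssum_sub _ x'])
      fix j u assume j: "j \<in> {i..d}" and u: "u \<in> U0 j"
      have eq: "M *v u - f i *s u = (f j - f i) *s u" using Mact j u by (simp add: vector_sadd_rdistrib algebra_simps)
      show "M *v u - f i *s u \<in> ssum {Suc i..d} Vs"
      proof (cases "j = i")
        case True then show ?thesis using eq ssum_zero by simp
      next
        case False
        have "u \<in> ssum {j..d} Vs" using u unfolding U0_def by simp
        also have "\<dots> \<subseteq> ssum {Suc i..d} Vs" by (rule ssum_mono) (use j False in auto)
        finally show ?thesis unfolding eq using ssum_sub vec.subspace_scale by blast
      qed
    qed
  qed
  have diagS: "\<forall>i\<le>d. \<forall>x\<in>ssum {..i} Vst. M *v x - f i *s x \<in> ssum {..<i} Vst"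
    if Mact: "\<forall>j\<le>d. \<forall>u\<in>U0 j. M *v u = f j *s u" for M f
  proof (intro allI impI ballI)
    fix i x assume i: "i \<le> d" and x: "x \<in> ssum {..i} Vst"
    have x': "x \<in> ssum {..i} U0" using x G0(2) i by simp
    show "M *v x - f i *s x \<in> ssum {..<i} Vst"
    proof (rule ssum_map[OF ssum_sub _ x'])
      fix j u assume j: "j \<in> {..i}" and u: "u \<in> U0 j"
      have eq: "M *v u - f i *s u = (f j - f i) *s u" using Mact j u i by (simp add: vector_sadd_rdistrib algebra_simps)
      show "M *v u - f i *s u \<in> ssum {..<i} Vst"
      proof (cases "j = i")
        case True then show ?thesis using eq ssum_zero by simp
      next
        case False
        have "u \<in> ssum {..j} Vst" using u unfolding U0_def by simp
        also have "\<dots> \<subseteq> ssum {..<i} Vst" by (rule ssum_mono) (use j False in auto)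
        finally show ?thesis unfolding eq using ssum_sub vec.subspace_scale by blast
      qed
    qed
  qed
  have U0Sd: "U0 (Suc d) = {0}" unfolding U0_def using ssum_zero by auto
  have I1: "A *v (Kinv *v x) = (a * (1 - q^2)) *s x + q^2 *s (Kinv *v (A *v x))" for x
  proof -
    let ?f = "\<lambda>x. A *v (Kinv *v x) - ((a * (1 - q^2)) *s x + q^2 *s (Kinv *v (A *v x)))"
    have "?f x = 0"
    proof (rule span_zero_lin[where S="\<Union>j\<in>{..d}. U0 j" and f="?f" and x=x])
      show "x \<in> vec.span (\<Union>j\<in>{..d}. U0 j)" using G0(3) unfolding ssum_def by simp
    next
      fix x y show "?f (x + y) = ?f x + ?f y" by (simp add: vec.add vector_add_ldistrib algebra_simps)
    next
      fix c' x show "?f (c' *s x) = c' *s ?f x"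
        by (simp add: vec.scale vector_add_ldistrib vector_ssub_ldistrib vector_smult_assoc mult.commute)
    next
      fix u assume "u \<in> (\<Union>j\<in>{..d}. U0 j)"
      then obtain j where j: "j \<le> d" "u \<in> U0 j" by blast
      define r where "r = A *v u - th j *s u"
      have r: "r \<in> U0 (Suc j)" unfolding r_def using G0(4) j by blast
      have Kr: "Kinv *v r = inverse (c (Suc j)) *s r"
      proof (cases "Suc j \<le> d")
        case True then show ?thesis using Kiact r by blast
      next
        case False then have "Suc j = Suc d" using j by simp
        then have "r = 0" using r U0Sd by simp
        then show ?thesis by simp
      qed
      have Au: "A *v u = th j *s u + r" unfolding r_def by simp
      have Ku: "Kinv *v u = inverse (c j) *s u" using Kiact j by blast
      have "?f u = inverse (c j) *s (th j *s u + r) - ((a * (1 - q^2)) *s u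
          + q^2 *s (th j *s (inverse (c j) *s u) + inverse (c (Suc j)) *s r))"
        by (simp add: Ku Au vec.scale vec.add Kr)
      also have "\<dots> = 0"
        using cnz[of j] q unfolding th_def cSuc
        by (simp add: vec_eq_iff field_simps)
      finally show "?f u = 0" .
    qed
    then show ?thesis by simp
  qed
  have I2: "As *v (K *v x) = (as * (1 - q^2)) *s x + q^2 *s (K *v (As *v x))" for x
  proof -
    let ?f = "\<lambda>x. As *v (K *v x) - ((as * (1 - q^2)) *s x + q^2 *s (K *v (As *v x)))"
    have "?f x = 0"
    proof (rule span_zero_lin[where S="\<Union>j\<in>{..d}. U0 j" and f="?f" and x=x])
      show "x \<in> vec.span (\<Union>j\<in>{..d}. U0 j)" using G0(3) unfolding ssum_def by simp
    next
      fix x y show "?f (x + y) = ?f x + ?f y" by (simp add: vec.add vector_add_ldistrib algebra_simps)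
    next
      fix c' x show "?f (c' *s x) = c' *s ?f x"
        by (simp add: vec.scale vector_add_ldistrib vector_ssub_ldistrib vector_smult_assoc mult.commute)
    next
      fix u assume "u \<in> (\<Union>j\<in>{..d}. U0 j)"
      then obtain j where j: "j \<le> d" "u \<in> U0 j" by blast
      define l where "l = As *v u - ths j *s u"
      have l: "l \<in> (if j = 0 then {0} else U0 (j - 1))" unfolding l_def using G0(5) j by blast
      have Kl: "q^2 *s (K *v l) = c j *s l"
      proof (cases "j = 0")
        case True then show ?thesis using l by simp
      next
        case False
        then have "l \<in> U0 (j - 1)" using l by simp
        then have "K *v l = c (j - 1) *s l" using Kact j by simp
        moreover have "c j = q^2 * c (j - 1)" using cSuc[of "j - 1"] False by simp
        ultimately show ?thesis by (simp add: vector_smult_assoc)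
      qed
      have Au: "As *v u = ths j *s u + l" unfolding l_def by simp
      have Ku: "K *v u = c j *s u" using Kact j by blast
      have "?f u = c j *s (ths j *s u + l) - ((as * (1 - q^2)) *s u
          + (q^2 * ths j * c j) *s u + c j *s l)"
        by (simp add: Ku Au vec.scale vec.add Kl[symmetric] vector_add_ldistrib vector_smult_assoc mult.commute)
      also have "\<dots> = 0"
        using cnz[of j] q unfolding ths_def
        by (simp add: vec_eq_iff field_simps)
      finally show "?f u = 0" .
    qed
    then show ?thesis by simp
  qed
  have D1: "\<forall>i\<le>d. \<forall>v\<in>Vs i. Kinv *v v - inverse (c i) *s v \<in> ssum {j. j \<le> d \<and> j = i + 1} Vs"
  proof (intro allI impI ballI)
    fix i v assume i: "i \<le> d" and v: "v \<in> Vs i"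
    have Av: "A *v v = th i *s v" using e i v by (simp add: eigenspace_def)
    define z where "z = Kinv *v v"
    have Az: "A *v z = (a * (1 - q^2)) *s v + (q^2 * th i) *s z"
      unfolding z_def I1 Av by (simp add: vec.scale vector_smult_assoc)
    define w where "w = z - inverse (c i) *s v"
    have "A *v w = (q^2 * th i) *s w"
      unfolding w_def using cnz[of i] q
      by (simp add: vec.diff vec.scale Az Av vec_eq_iff th_def field_simps)
    then have wE: "w \<in> eigenspace A (q^2 * th i)" by (simp add: eigenspace_def)
    have thS: "q^2 * th i = th (Suc i)" unfolding th_def cSuc by simp
    show "Kinv *v v - inverse (c i) *s v \<in> ssum {j. j \<le> d \<and> j = i + 1} Vs"
      unfolding z_def[symmetric] w_def[symmetric]
    proof (cases "i < d")
      case True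
      then have "w \<in> Vs (Suc i)" using wE thS e by simp
      then show "w \<in> ssum {j. j \<le> d \<and> j = i + 1} Vs" using ssum_superset[of "Suc i" "{j. j \<le> d \<and> j = i + 1}" Vs] True by auto
    next
      case False
      have "w = 0"
      proof (rule ccontr)
        assume "w \<noteq> 0"
        then obtain j where j: "j \<le> d" "q^2 * th i = th j" using so_eig[OF so e wE] by blast
        then have "c (Suc i) = c j" using thS assms(7) unfolding th_def by simp
        then have "Suc i = j" by (rule cinj)
        then show False using j i False by simp
      qed
      then show "w \<in> ssum {j. j \<le> d \<and> j = i + 1} Vs" using ssum_zero by simp
    qed
  qed
  have D2: "\<forall>i\<le>d. \<forall>v\<in>Vst i. K *v v - c i *s v \<in> ssum {j. j \<le> d \<and> j + 1 = i} Vst"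
  proof (intro allI impI ballI)
    fix i v assume i: "i \<le> d" and v: "v \<in> Vst i"
    have Av: "As *v v = ths i *s v" using es i v by (simp add: eigenspace_def)
    define z where "z = K *v v"
    have Az: "As *v z = (as * (1 - q^2)) *s v + (q^2 * ths i) *s z"
      unfolding z_def I2 Av by (simp add: vec.scale vector_smult_assoc)
    define w where "w = z - c i *s v"
    have "As *v w = (q^2 * ths i) *s w"
      unfolding w_def using cnz[of i] q
      by (simp add: vec.diff vec.scale Az Av vec_eq_iff ths_def field_simps)
    then have wE: "w \<in> eigenspace As (q^2 * ths i)" by (simp add: eigenspace_def)
    show "K *v v - c i *s v \<in> ssum {j. j \<le> d \<and> j + 1 = i} Vst"
      unfolding z_def[symmetric] w_def[symmetric]
    proof (cases "i = 0")
      case False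
      have "c i = q^2 * c (i - 1)" using cSuc[of "i - 1"] False by simp
      then have thS: "q^2 * ths i = ths (i - 1)" unfolding ths_def using q cnz[of "i - 1"] by (simp add: field_simps)
      have "w \<in> Vst (i - 1)" using wE thS es i by simp
      then show "w \<in> ssum {j. j \<le> d \<and> j + 1 = i} Vst"
      proof -
        have "i - 1 \<in> {j. j \<le> d \<and> j + 1 = i}" using False i by auto
        then show ?thesis using ssum_superset[of "i - 1" "{j. j \<le> d \<and> j + 1 = i}" Vst] \<open>w \<in> Vst (i - 1)\<close> by blast
      qed
    next
      case True
      have "w = 0"
      proof (rule ccontr)
        assume "w \<noteq> 0"
        then obtain j where j: "j \<le> d" "q^2 * ths i = ths j" using so_eig[OF sos es wE] by blast
        then have "q^2 * inverse (c 0) = inverse (c j)" using True assms(8) unfolding ths_def by simp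
        then have "c 0 = q^2 * c j" using q cnz[of 0] cnz[of j] by (simp add: field_simps)
        then have "c 0 = c (Suc j)" using cSuc by simp
        then have "0 = Suc j" by (rule cinj)
        then show False by simp
      qed
      then show "w \<in> ssum {j. j \<le> d \<and> j + 1 = i} Vst" using ssum_zero by simp
    qed
  qed
  have KV: "\<forall>m<d. \<forall>x\<in>ssum {..m} Vs. Kinv *v x - f *s x \<in> ssum {..Suc m} Vs" for f
  proof (intro allI impI ballI)
    fix m x assume m: "m < d" and x: "x \<in> ssum {..m} Vs"
    show "Kinv *v x - f *s x \<in> ssum {..Suc m} Vs"
    proof (rule ssum_map[OF ssum_sub _ x])
      fix k u assume k: "k \<in> {..m}" and u: "u \<in> Vs k"
      have "Kinv *v u - inverse (c k) *s u \<in> ssum {j. j \<le> d \<and> j = k + 1} Vs" using D1 k m u by simp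
      also have "\<dots> \<subseteq> ssum {..Suc m} Vs" by (rule ssum_mono) (use k in auto)
      finally have 1: "Kinv *v u - inverse (c k) *s u \<in> ssum {..Suc m} Vs" .
      have "u \<in> ssum {..Suc m} Vs" using ssum_superset[of k "{..Suc m}" Vs] k u by auto
      then have 2: "(inverse (c k) - f) *s u \<in> ssum {..Suc m} Vs" using ssum_sub vec.subspace_scale by blast
      have "Kinv *v u - f *s u = (Kinv *v u - inverse (c k) *s u) + (inverse (c k) - f) *s u"
        by (simp add: vector_sadd_rdistrib algebra_simps)
      then show "Kinv *v u - f *s u \<in> ssum {..Suc m} Vs" using 1 2 ssum_sub vec.subspace_add by metis
    qed
  qed
  have KVst: "\<forall>m\<le>d. \<forall>x\<in>ssum {m..d} Vst. K *v x - f *s x \<in> ssum {m - 1..d} Vst" for f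
  proof (intro allI impI ballI)
    fix m x assume m: "m \<le> d" and x: "x \<in> ssum {m..d} Vst"
    show "K *v x - f *s x \<in> ssum {m - 1..d} Vst"
    proof (rule ssum_map[OF ssum_sub _ x])
      fix k u assume k: "k \<in> {m..d}" and u: "u \<in> Vst k"
      have "K *v u - c k *s u \<in> ssum {j. j \<le> d \<and> j + 1 = k} Vst" using D2 k u by simp
      also have "\<dots> \<subseteq> ssum {m - 1..d} Vst" by (rule ssum_mono) (use k in auto)
      finally have 1: "K *v u - c k *s u \<in> ssum {m - 1..d} Vst" .
      have "k \<in> {m - 1..d}" using k by auto
      then have "u \<in> ssum {m - 1..d} Vst" using ssum_superset[of k "{m - 1..d}" Vst] u by blast
      then have 2: "(c k - f) *s u \<in> ssum {m - 1..d} Vst" using ssum_sub vec.subspace_scale by blast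
      have "K *v u - f *s u = (K *v u - c k *s u) + (c k - f) *s u"
        by (simp add: vector_sadd_rdistrib algebra_simps)
      then show "K *v u - f *s u \<in> ssum {m - 1..d} Vst" using 1 2 ssum_sub vec.subspace_add by metis
    qed
  qed
  have so1: "standard_ordering A As d (\<lambda>j. Vs (d - j))" by (rule so_rev[OF so])
  have sos2: "standard_ordering As A d (\<lambda>j. Vst (d - j))" by (rule so_rev[OF sos])
  have e1: "\<forall>i\<le>d. Vs (d - i) = eigenspace A (th (d - i))" using e by simp
  have es2: "\<forall>i\<le>d. Vst (d - i) = eigenspace As (ths (d - i))" using es by simp
  note G1 = generic[OF tp so1 sos e1 es refl]
  note G2 = generic[OF tp so1 sos2 e1 es2 refl]
  note G3 = generic[OF tp so sos2 e es2 refl]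
  define U1 where "U1 = dec_0s0 d Vs Vst"
  define U2 where "U2 = dec_Ds0 d Vs Vst"
  define U3 where "U3 = dec_DsD d Vs Vst"
  have U1c: "ssum I (\<lambda>i. ssum {..i} Vst \<inter> ssum {i..d} (\<lambda>j. Vs (d - j))) = ssum I U1" if "I \<subseteq> {..d}" for I
    by (rule ssum_cong) (use that in \<open>auto simp: U1_def dec_0s0_def rev_T\<close>)
  have U2c: "ssum I (\<lambda>i. ssum {..i} (\<lambda>j. Vst (d - j)) \<inter> ssum {i..d} (\<lambda>j. Vs (d - j))) = ssum I U2" if "I \<subseteq> {..d}" for I
    by (rule ssum_cong) (use that in \<open>auto simp: U2_def dec_Ds0_def rev_T rev_S\<close>)
  have U3c: "ssum I (\<lambda>i. ssum {..i} (\<lambda>j. Vst (d - j)) \<inter> ssum {i..d} Vs) = ssum I U3" if "I \<subseteq> {..d}" for I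
    by (rule ssum_cong) (use that in \<open>auto simp: U3_def dec_DsD_def rev_S\<close>)
  have C1: "\<forall>i\<le>d. shifted_image K (c i) (Vs i) \<subseteq> ssum {i+1..d} Vs \<and>
      shifted_image Kinv (inverse (c i)) (Vs i) \<subseteq> ssum {j. j \<le> d \<and> j = i + 1} Vs"
  proof (intro allI impI conjI)
    fix i assume i: "i \<le> d"
    show "shifted_image K (c i) (Vs i) \<subseteq> ssum {i+1..d} Vs"
      unfolding shifted_image_def
    proof (rule image_subsetI)
      fix v assume "v \<in> Vs i"
      then have "v \<in> ssum {i..d} Vs" using ssum_superset[of i "{i..d}" Vs] i by auto
      then show "K *v v - c i *s v \<in> ssum {i+1..d} Vs" using diagT[OF Kact] i by simp
    qed
    show "shifted_image Kinv (inverse (c i)) (Vs i) \<subseteq> ssum {j. j \<le> d \<and> j = i + 1} Vs"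
      unfolding shifted_image_def using D1 i by blast
  qed
  have C2: "\<forall>i\<le>d. shifted_image K (c i) (Vst i) \<subseteq> ssum {j. j \<le> d \<and> j + 1 = i} Vst \<and>
      shifted_image Kinv (inverse (c i)) (Vst i) \<subseteq> ssum {..<i} Vst"
  proof (intro allI impI conjI)
    fix i assume i: "i \<le> d"
    show "shifted_image K (c i) (Vst i) \<subseteq> ssum {j. j \<le> d \<and> j + 1 = i} Vst"
      unfolding shifted_image_def using D2 i by blast
    show "shifted_image Kinv (inverse (c i)) (Vst i) \<subseteq> ssum {..<i} Vst"
      unfolding shifted_image_def
    proof (rule image_subsetI)
      fix v assume "v \<in> Vst i"
      then have "v \<in> ssum {..i} Vst" using ssum_superset[of i "{..i}" Vst] by auto
      then show "Kinv *v v - inverse (c i) *s v \<in> ssum {..<i} Vst" using diagS[OF Kiact] i by simp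
    qed
  qed
  have C3: "\<forall>i\<le>d. shifted_image K (c i) (U0 i) = {0} \<and> shifted_image Kinv (inverse (c i)) (U0 i) = {0}"
  proof (intro allI impI conjI)
    fix i assume i: "i \<le> d"
    have z: "0 \<in> U0 i" using subU0 vec.subspace_0 by blast
    show "shifted_image K (c i) (U0 i) = {0}"
      unfolding shifted_image_def using Kact i z by (force simp: image_iff)
    show "shifted_image Kinv (inverse (c i)) (U0 i) = {0}"
      unfolding shifted_image_def using Kiact i z by (force simp: image_iff)
  qed
  have C4: "\<forall>i\<le>d. shifted_image K (c i) (U1 i) \<subseteq> ssum {..<i} U1 \<and>
      shifted_image Kinv (inverse (c i)) (U1 i) \<subseteq> ssum {j. j \<le> d \<and> j + 1 = i} U1"
  proof (intro allI impI conjI)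
    fix i assume i: "i \<le> d"
    have U1i: "U1 j = ssum {..j} Vst \<inter> ssum {..d - j} Vs" for j unfolding U1_def dec_0s0_def by simp
    have SU1: "ssum {..<i} Vst \<subseteq> ssum {..<i} U1"
    proof (cases "i = 0")
      case True then show ?thesis by simp
    next
      case False
      then have li: "{..<i} = {..i - 1}" by auto
      have "ssum {..i - 1} Vst = ssum {..i - 1} (\<lambda>i. ssum {..i} Vst \<inter> ssum {i..d} (\<lambda>j. Vs (d - j)))"
        using G1(2) i by simp
      also have "\<dots> = ssum {..i - 1} U1" by (rule U1c) (use i in auto)
      finally show ?thesis unfolding li by simp
    qed
    show "shifted_image K (c i) (U1 i) \<subseteq> ssum {..<i} U1"
      unfolding shifted_image_def
    proof (rule image_subsetI)
      fix v assume "v \<in> U1 i"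
      then have "v \<in> ssum {..i} Vst" unfolding U1i by simp
      then show "K *v v - c i *s v \<in> ssum {..<i} U1" using diagS[OF Kact] i SU1 by blast
    qed
    show "shifted_image Kinv (inverse (c i)) (U1 i) \<subseteq> ssum {j. j \<le> d \<and> j + 1 = i} U1"
      unfolding shifted_image_def
    proof (rule image_subsetI)
      fix v assume v: "v \<in> U1 i"
      then have "v \<in> ssum {..i} Vst" unfolding U1i by simp
      then have w1: "Kinv *v v - inverse (c i) *s v \<in> ssum {..<i} Vst" using diagS[OF Kiact] i by blast
      show "Kinv *v v - inverse (c i) *s v \<in> ssum {j. j \<le> d \<and> j + 1 = i} U1"
      proof (cases "i = 0")
        case True then show ?thesis using w1 by simp
      next
        case False
        then have li: "{..<i} = {..i - 1}" by auto
        have "v \<in> ssum {..d - i} Vs" using v unfolding U1i by simp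
        then have "Kinv *v v - inverse (c i) *s v \<in> ssum {..Suc (d - i)} Vs" using KV False i by simp
        moreover have "Suc (d - i) = d - (i - 1)" using False i by simp
        ultimately have "Kinv *v v - inverse (c i) *s v \<in> U1 (i - 1)" using w1 unfolding U1i li by simp
        moreover have "{j. j \<le> d \<and> j + 1 = i} = {i - 1}" using False i by auto
        moreover have "vec.subspace (U1 (i - 1))" unfolding U1i using ssum_sub ssum_sub by (rule vec.subspace_inter)
        ultimately show ?thesis by (simp add: ssum_single)
      qed
    qed
  qed
  have C5: "\<forall>i\<le>d. (\<lambda>v. K *v v) ` U2 i \<subseteq> ssum {..min d (i+1)} U2 \<and>
      (\<lambda>v. Kinv *v v) ` U2 i \<subseteq> ssum {i-1..d} U2"
  proof (intro allI impI conjI)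
    fix i assume i: "i \<le> d"
    have U2i: "U2 j = ssum {d - j..d} Vst \<inter> ssum {..d - j} Vs" for j unfolding U2_def dec_Ds0_def by simp
    show "(\<lambda>v. K *v v) ` U2 i \<subseteq> ssum {..min d (i+1)} U2"
    proof (rule image_subsetI)
      fix v assume "v \<in> U2 i"
      then have "v \<in> ssum {d - i..d} Vst" unfolding U2i by simp
      moreover have "d - i \<le> d" by simp
      ultimately have "K *v v - 0 *s v \<in> ssum {d - i - 1..d} Vst" using KVst[of 0] by blast
      then have 1: "K *v v \<in> ssum {d - i - 1..d} Vst" by simp
      define j where "j = min d (i+1)"
      have j: "j \<le> d" "d - j = d - i - 1" unfolding j_def by auto
      have "ssum {d - i - 1..d} Vst = ssum {..j} (\<lambda>k. Vst (d - k))" using rev_S[OF j(1), of Vst] j(2) by simp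
      also have "\<dots> = ssum {..j} (\<lambda>i. ssum {..i} (\<lambda>j. Vst (d - j)) \<inter> ssum {i..d} (\<lambda>j. Vs (d - j)))"
        using G2(2) j(1) by simp
      also have "\<dots> = ssum {..j} U2" by (rule U2c) (use j in auto)
      finally show "K *v v \<in> ssum {..min d (i+1)} U2" using 1 unfolding j_def by simp
    qed
    show "(\<lambda>v. Kinv *v v) ` U2 i \<subseteq> ssum {i-1..d} U2"
    proof (rule image_subsetI)
      fix v assume v: "v \<in> U2 i"
      show "Kinv *v v \<in> ssum {i-1..d} U2"
      proof (cases "i = 0")
        case True
        have "ssum {..d} (\<lambda>i. ssum {..i} (\<lambda>j. Vst (d - j)) \<inter> ssum {i..d} (\<lambda>j. Vs (d - j))) = UNIV"
          using G2(3) .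
        then have "ssum {..d} U2 = UNIV" using U2c[of "{..d}"] by simp
        then show ?thesis using True by (simp add: atMost_atLeast0)
      next
        case False
        have "v \<in> ssum {..d - i} Vs" using v unfolding U2i by simp
        then have "Kinv *v v - 0 *s v \<in> ssum {..Suc (d - i)} Vs" using KV[of 0] False i by simp
        then have 1: "Kinv *v v \<in> ssum {..Suc (d - i)} Vs" by simp
        have "Suc (d - i) = d - (i - 1)" using False i by simp
        then have "ssum {..Suc (d - i)} Vs = ssum {i - 1..d} (\<lambda>k. Vs (d - k))" using rev_T[of "i - 1" d Vs] i by simp
        also have "\<dots> = ssum {i - 1..d} (\<lambda>i. ssum {..i} (\<lambda>j. Vst (d - j)) \<inter> ssum {i..d} (\<lambda>j. Vs (d - j)))"
          using G2(1) i by simp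
        also have "\<dots> = ssum {i - 1..d} U2" by (rule U2c) auto
        finally show ?thesis using 1 by simp
      qed
    qed
  qed
  have C6: "\<forall>i\<le>d. shifted_image K (c i) (U3 i) \<subseteq> ssum {j. j \<le> d \<and> j = i + 1} U3 \<and>
      shifted_image Kinv (inverse (c i)) (U3 i) \<subseteq> ssum {i+1..d} U3"
  proof (intro allI impI conjI)
    fix i assume i: "i \<le> d"
    have U3i: "U3 j = ssum {d - j..d} Vst \<inter> ssum {j..d} Vs" for j unfolding U3_def dec_DsD_def by simp
    show "shifted_image K (c i) (U3 i) \<subseteq> ssum {j. j \<le> d \<and> j = i + 1} U3"
      unfolding shifted_image_def
    proof (rule image_subsetI)
      fix v assume v: "v \<in> U3 i"
      have 1: "K *v v - c i *s v \<in> ssum {Suc i..d} Vs" using diagT[OF Kact] v i unfolding U3i by simp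
      show "K *v v - c i *s v \<in> ssum {j. j \<le> d \<and> j = i + 1} U3"
      proof (cases "i < d")
        case False
        then have "{Suc i..d} = {}" by auto
        then show ?thesis using 1 ssum_zero by simp
      next
        case True
        have "v \<in> ssum {d - i..d} Vst" using v unfolding U3i by simp
        moreover have "d - i \<le> d" by simp
        ultimately have "K *v v - c i *s v \<in> ssum {d - i - 1..d} Vst" using KVst[of "c i"] by blast
        moreover have "d - i - 1 = d - Suc i" by simp
        ultimately have "K *v v - c i *s v \<in> U3 (Suc i)" using 1 unfolding U3i by simp
        moreover have "{j. j \<le> d \<and> j = i + 1} = {Suc i}" using True by auto
        moreover have "vec.subspace (U3 (Suc i))" unfolding U3i using ssum_sub ssum_sub by (rule vec.subspace_inter)
        ultimately show ?thesis by (simp add: ssum_single)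
      qed
    qed
    show "shifted_image Kinv (inverse (c i)) (U3 i) \<subseteq> ssum {i+1..d} U3"
      unfolding shifted_image_def
    proof (rule image_subsetI)
      fix v assume v: "v \<in> U3 i"
      have 1: "Kinv *v v - inverse (c i) *s v \<in> ssum {Suc i..d} Vs" using diagT[OF Kiact] v i unfolding U3i by simp
      show "Kinv *v v - inverse (c i) *s v \<in> ssum {i+1..d} U3"
      proof (cases "i < d")
        case False
        then have "{Suc i..d} = {}" by auto
        then show ?thesis using 1 ssum_zero by simp
      next
        case True
        have "ssum {Suc i..d} Vs = ssum {Suc i..d} (\<lambda>i. ssum {..i} (\<lambda>j. Vst (d - j)) \<inter> ssum {i..d} Vs)"
          using G3(1) True by simp
        also have "\<dots> = ssum {Suc i..d} U3" by (rule U3c) auto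
        finally show ?thesis using 1 by simp
      qed
    qed
  qed
  have dec0D: "dec_0D d Vs Vst = Vs" by (rule ext) (simp add: dec_0D_def)
  have dec0sDs: "dec_0sDs d Vs Vst = Vst" by (rule ext) (simp add: dec_0sDs_def)
  show ?thesis
    unfolding Let_def c_def[symmetric] cinv Kinv_def[symmetric] dec0D dec0sDs U0eq
      U1_def[symmetric] U2_def[symmetric] U3_def[symmetric]
    using C1 C2 C3 C4 C5 C6 by blast
qed


end
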